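(* Let $K$ be a field and $m,n,r$ positive integers. For positive integers $a,b,c$, let $R_{abc}=K[x_{ij}^k\mid 1\le i\le a,1\le j\le b,1\le k\le c]$ and let $I_{ab}^c\subseteq R_{abc}$ be the ideal generated by all $2$-minors of the horizontal concatenation $(X_1\ \cdots\ X_c)$ and all $2$-minors of the vertical concatenation (the $X_k$ stacked vertically) of the $a\times b$ matrices $X_k=(x_{ij}^k)$, $k=1,\dots,c$. Let $\sigma$ be any permutation of $(m,n,r)$, i.e. $(\sigma(m),\sigma(n),\sigma(r))$ is a reordering of the triple $(m,n,r)$. Then $R_{mnr}/I_{mn}^r\cong R_{\sigma(m)\sigma(n)\sigma(r)}/I_{\sigma(m)\sigma(n)}^{\sigma(r)}$ as $K$-algebras. *)

theory Defs
  imports "HOL-Library.Poly_Mapping" "HOL-Library.Multiset" "HOL-Algebra.QuotRing"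
begin

text \<open>Multivariate polynomials over a field 'k in the variables x_{ij}^k, encoded as
  finitely supported maps from monomials (finitely supported exponent maps on the
  index triples (i,j,k)) to coefficients; multiplication is the convolution product.\<close>

type_synonym 'k mpoly = "((nat \<times> nat \<times> nat) \<Rightarrow>\<^sub>0 nat) \<Rightarrow>\<^sub>0 'k"

definition xvar :: "nat \<Rightarrow> nat \<Rightarrow> nat \<Rightarrow> 'k::field mpoly" where
  "xvar i j k = Poly_Mapping.single (Poly_Mapping.single (i, j, k) 1) 1"

definition pconst :: "'k::field \<Rightarrow> 'k mpoly" where
  "pconst c = Poly_Mapping.single 0 c"

definition pvars :: "'k::field mpoly \<Rightarrow> (nat \<times> nat \<times> nat) set" where
  "pvars p = \<Union> (Poly_Mapping.keys ` Poly_Mapping.keys p)"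

definition Rpoly :: "nat \<Rightarrow> nat \<Rightarrow> nat \<Rightarrow> 'k::field mpoly ring" where
  "Rpoly a b c = \<lparr>carrier = {p. pvars p \<subseteq> {1..a} \<times> {1..b} \<times> {1..c}},
                  mult = (*), one = 1, zero = 0, add = (+)\<rparr>"

text \<open>Horizontal concatenation (X_1 ... X_c): an a x (b*c) matrix, rows 1..a,
  columns 1..b*c; column (k-1)*b + j is column j of X_k.\<close>
definition hcat :: "nat \<Rightarrow> nat \<Rightarrow> nat \<Rightarrow> 'k::field mpoly" where
  "hcat b i p = xvar i ((p - 1) mod b + 1) ((p - 1) div b + 1)"

text \<open>Vertical concatenation of X_1,...,X_c: an (a*c) x b matrix, rows 1..a*c,
  columns 1..b; row (k-1)*a + i is row i of X_k.\<close>
definition vcat :: "nat \<Rightarrow> nat \<Rightarrow> nat \<Rightarrow> 'k::field mpoly" where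
  "vcat a q j = xvar ((q - 1) mod a + 1) j ((q - 1) div a + 1)"

definition minors2 :: "(nat \<Rightarrow> nat \<Rightarrow> 'k::field mpoly) \<Rightarrow> nat \<Rightarrow> nat \<Rightarrow> 'k mpoly set" where
  "minors2 M nr nc = {M i p * M i' q - M i q * M i' p | i i' p q.
      1 \<le> i \<and> i < i' \<and> i' \<le> nr \<and> 1 \<le> p \<and> p < q \<and> q \<le> nc}"

definition Iideal :: "nat \<Rightarrow> nat \<Rightarrow> nat \<Rightarrow> 'k::field mpoly set" where
  "Iideal a b c = genideal (Rpoly a b c)
      (minors2 (hcat b) a (b * c) \<union> minors2 (vcat a) (a * c) b)"

definition Qalg :: "nat \<Rightarrow> nat \<Rightarrow> nat \<Rightarrow> 'k::field mpoly set ring" where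
  "Qalg a b c = Rpoly a b c Quot Iideal a b c"

definition qconst :: "nat \<Rightarrow> nat \<Rightarrow> nat \<Rightarrow> 'k::field \<Rightarrow> 'k mpoly set" where
  "qconst a b c k = Iideal a b c +>\<^bsub>Rpoly a b c\<^esub> pconst k"

definition K_alg_iso :: "nat \<Rightarrow> nat \<Rightarrow> nat \<Rightarrow> nat \<Rightarrow> nat \<Rightarrow> nat
    \<Rightarrow> ('k::field mpoly set \<Rightarrow> 'k mpoly set) \<Rightarrow> bool" where
  "K_alg_iso a b c a' b' c' \<phi> \<longleftrightarrow>
     \<phi> \<in> ring_iso (Qalg a b c) (Qalg a' b' c') \<and>
     (\<forall>k. \<phi> (qconst a b c k) = qconst a' b' c' k)"

end

theory Submission
  imports Defs
begin


definition ren_mono :: "(nat\<times>nat\<times>nat \<Rightarrow> nat\<times>nat\<times>nat) \<Rightarrow> (nat\<times>nat\<times>nat \<Rightarrow>\<^sub>0 nat) \<Rightarrow> (nat\<times>nat\<times>nat \<Rightarrow>\<^sub>0 nat)"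
  where "ren_mono f m = Poly_Mapping.map_key f m"

definition ren :: "(nat\<times>nat\<times>nat \<Rightarrow> nat\<times>nat\<times>nat) \<Rightarrow> 'k::field mpoly \<Rightarrow> 'k mpoly"
  where "ren f p = Poly_Mapping.map_key (ren_mono f) p"

lemma lookup_map_key: assumes [transfer_rule]: "inj f" shows "Poly_Mapping.lookup (Poly_Mapping.map_key f p) k = Poly_Mapping.lookup p (f k)"
  by transfer simp

locale invol = fixes f :: "nat\<times>nat\<times>nat \<Rightarrow> nat\<times>nat\<times>nat"
  assumes ff: "\<And>t. f (f t) = t"
begin

lemma inj_f: "inj f" by (metis ff injI)

lemma lookup_ren_mono: "Poly_Mapping.lookup (ren_mono f m) t = Poly_Mapping.lookup m (f t)"
  by (simp add: ren_mono_def lookup_map_key inj_f)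

lemma ren_mono_ren_mono[simp]: "ren_mono f (ren_mono f m) = m"
  by (rule poly_mapping_eqI) (simp add: lookup_ren_mono ff)

lemma inj_ren_mono: "inj (ren_mono f)"
  by (metis ren_mono_ren_mono injI)

lemma ren_mono_add: "ren_mono f (m + n) = ren_mono f m + ren_mono f n"
  by (rule poly_mapping_eqI) (simp add: lookup_ren_mono lookup_add)

lemma ren_mono_single: "ren_mono f (Poly_Mapping.single t v) = Poly_Mapping.single (f t) v"
  by (rule poly_mapping_eqI) (simp add: lookup_ren_mono lookup_single when_def ff; metis ff)

lemma ren_mono_zero[simp]: "ren_mono f 0 = 0"
  by (rule poly_mapping_eqI) (simp add: lookup_ren_mono)

lemma lookup_ren: "Poly_Mapping.lookup (ren f p) m = Poly_Mapping.lookup p (ren_mono f m)"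
  by (simp add: ren_def lookup_map_key inj_ren_mono)

lemma ren_ren[simp]: "ren f (ren f p) = p"
  by (rule poly_mapping_eqI) (simp add: lookup_ren)

lemma ren_add: "ren f (p + q) = ren f p + ren f q"
  by (rule poly_mapping_eqI) (simp add: lookup_ren lookup_add)

lemma ren_uminus: "ren f (- p) = - ren f p"
  by (rule poly_mapping_eqI) (simp add: lookup_ren)

lemma ren_diff: "ren f (p - q) = ren f p - ren f q"
  by (rule poly_mapping_eqI) (simp add: lookup_ren lookup_minus)

lemma ren_zero[simp]: "ren f 0 = 0"
  by (rule poly_mapping_eqI) (simp add: lookup_ren)

lemma ren_single: "ren f (Poly_Mapping.single m c) = Poly_Mapping.single (ren_mono f m) c"
  by (rule poly_mapping_eqI) (simp add: lookup_ren lookup_single when_def; metis ren_mono_ren_mono)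

lemma ren_one[simp]: "ren f 1 = 1"
  by (metis ren_single ren_mono_zero single_one)

lemma ren_pconst[simp]: "ren f (pconst c) = pconst c"
  by (simp add: pconst_def ren_single)

lemma ren_xvar: "ren f (xvar i j k) = (case f (i,j,k) of (i',j',k') \<Rightarrow> xvar i' j' k')"
  by (simp add: xvar_def ren_single ren_mono_single split: prod.split)

lemma ren_mult: "ren f (p * q) = ren f p * ren f q"
proof (rule poly_mapping_eqI)
  fix m
  let ?g = "ren_mono f"
  have bij: "bij ?g" by (metis bijI' ren_mono_ren_mono)
  have "Poly_Mapping.lookup (ren f (p*q)) m = (\<Sum>l. Poly_Mapping.lookup p l * (\<Sum>q'. Poly_Mapping.lookup q q' when ?g m = l + q'))"
    by (simp add: lookup_ren lookup_mult)
  also have "\<dots> = (\<Sum>l. Poly_Mapping.lookup p (?g l) * (\<Sum>q'. Poly_Mapping.lookup q q' when ?g m = ?g l + q'))"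
    by (rule Sum_any.reindex_cong[OF bij]) (simp add: fun_eq_iff)
  also have "\<dots> = (\<Sum>l. Poly_Mapping.lookup p (?g l) * (\<Sum>q'. Poly_Mapping.lookup q (?g q') when ?g m = ?g l + ?g q'))"
    by (rule Sum_any.cong, rule arg_cong[where f="\<lambda>x. _ * x"], rule Sum_any.reindex_cong[OF bij]) (simp add: fun_eq_iff)
  also have "\<dots> = (\<Sum>l. Poly_Mapping.lookup p (?g l) * (\<Sum>q'. Poly_Mapping.lookup q (?g q') when m = l + q'))"
  proof -
    have "(?g m = ?g l + ?g q') = (m = l + q')" for l q'
      by (metis ren_mono_add ren_mono_ren_mono)
    then show ?thesis by simp
  qed
  also have "\<dots> = Poly_Mapping.lookup (ren f p * ren f q) m"
    by (simp add: lookup_ren lookup_mult)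
  finally show "Poly_Mapping.lookup (ren f (p*q)) m = Poly_Mapping.lookup (ren f p * ren f q) m" .
qed

lemma keys_ren_mono: "Poly_Mapping.keys (ren_mono f m) = f ` Poly_Mapping.keys m"
proof (rule Set.set_eqI)
  fix t show "t \<in> Poly_Mapping.keys (ren_mono f m) \<longleftrightarrow> t \<in> f ` Poly_Mapping.keys m"
    unfolding in_keys_iff lookup_ren_mono image_iff by (metis ff in_keys_iff)
qed

lemma keys_ren: "Poly_Mapping.keys (ren f p) = ren_mono f ` Poly_Mapping.keys p"
proof (rule Set.set_eqI)
  fix t show "t \<in> Poly_Mapping.keys (ren f p) \<longleftrightarrow> t \<in> ren_mono f ` Poly_Mapping.keys p"
    unfolding in_keys_iff lookup_ren image_iff by (metis ren_mono_ren_mono in_keys_iff)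
qed

lemma pvars_ren: "pvars (ren f p) = f ` pvars p"
  by (auto simp: pvars_def keys_ren keys_ren_mono)

end


lemma pvars_add: "pvars (p + q) \<subseteq> pvars p \<union> pvars q"
  unfolding pvars_def using keys_add[of p q] by blast

lemma pvars_uminus[simp]: "pvars (- p) = pvars p"
proof -
  have "Poly_Mapping.keys (- p) = Poly_Mapping.keys p" by (simp add: in_keys_iff Set.set_eqI)
  then show ?thesis by (simp add: pvars_def)
qed

lemma pvars_diff: "pvars (p - q) \<subseteq> pvars p \<union> pvars q"
  using pvars_add[of p "-q"] by simp

lemma pvars_zero[simp]: "pvars 0 = {}" by (simp add: pvars_def)
lemma pvars_one[simp]: "pvars 1 = {}" by (simp add: pvars_def)

lemma pvars_mult: "pvars (p * q) \<subseteq> pvars p \<union> pvars q"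
proof
  fix t assume "t \<in> pvars (p*q)"
  then obtain m where m: "m \<in> Poly_Mapping.keys (p*q)" "t \<in> Poly_Mapping.keys m" by (auto simp: pvars_def)
  then obtain u v where uv: "m = u + v" "u \<in> Poly_Mapping.keys p" "v \<in> Poly_Mapping.keys q"
    using keys_mult[of p q] by blast
  then have "t \<in> Poly_Mapping.keys u \<union> Poly_Mapping.keys v" using m keys_add[of u v] by blast
  then show "t \<in> pvars p \<union> pvars q" using uv by (auto simp: pvars_def)
qed

lemma pvars_xvar: "pvars (xvar i j k :: 'k::field mpoly) = {(i,j,k)}"
  by (simp add: pvars_def xvar_def)

lemma pvars_pconst: "pvars (pconst c) = {}"
  by (simp add: pvars_def pconst_def)

lemma carrier_Rpoly: "carrier (Rpoly a b c) = {p. pvars p \<subseteq> {1..a} \<times> {1..b} \<times> {1..c}}"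
  by (simp add: Rpoly_def)

lemma Rpoly_ops[simp]: "mult (Rpoly a b c) = (*)" "add (Rpoly a b c) = (+)" "one (Rpoly a b c) = 1"
  "zero (Rpoly a b c) = 0"
  by (simp_all add: Rpoly_def)

lemma Rpoly_closed:
  assumes "p \<in> carrier (Rpoly a b c)" "q \<in> carrier (Rpoly a b c)"
  shows "p + q \<in> carrier (Rpoly a b c)" "p * q \<in> carrier (Rpoly a b c)" "- p \<in> carrier (Rpoly a b c)"
    "p - q \<in> carrier (Rpoly a b c)"
  using assms pvars_add[of p q] pvars_mult[of p q] pvars_diff[of p q] by (auto simp: carrier_Rpoly)

lemma Rpoly_zero_one[simp]: "0 \<in> carrier (Rpoly a b c)" "1 \<in> carrier (Rpoly a b c)"
  by (auto simp: carrier_Rpoly)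

lemma Rpoly_cring: "cring (Rpoly a b c :: 'k::field mpoly ring)"
proof (rule cringI)
  show "abelian_group (Rpoly a b c :: 'k mpoly ring)"
    by (rule abelian_groupI) (auto simp: Rpoly_closed add.assoc add.commute intro!: bexI[of _ "- _"])
  show "comm_monoid (Rpoly a b c :: 'k mpoly ring)"
    by (rule comm_monoidI) (auto simp: Rpoly_closed mult.assoc mult.commute)
qed (simp add: distrib_right)

lemma Rpoly_ring: "ring (Rpoly a b c :: 'k::field mpoly ring)"
  using Rpoly_cring cring.axioms(1) by blast

lemma Rpoly_ainv: assumes "x \<in> carrier (Rpoly a b c :: 'k::field mpoly ring)"
  shows "\<ominus>\<^bsub>Rpoly a b c\<^esub> x = - x"
proof -
  interpret cring "Rpoly a b c :: 'k mpoly ring" by (rule Rpoly_cring)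
  show ?thesis by (rule minus_equality) (use assms in \<open>auto simp: Rpoly_closed\<close>)
qed

lemma ideal_Rpoly_iff:
  "ideal I (Rpoly a b c :: 'k::field mpoly ring) \<longleftrightarrow>
    I \<subseteq> carrier (Rpoly a b c) \<and> 0 \<in> I \<and> (\<forall>x\<in>I. \<forall>y\<in>I. x + y \<in> I) \<and> (\<forall>x\<in>I. - x \<in> I)
    \<and> (\<forall>x\<in>I. \<forall>r\<in>carrier (Rpoly a b c). r * x \<in> I)"
  (is "?L \<longleftrightarrow> ?R")
proof
  assume ?L
  then interpret ideal I "Rpoly a b c :: 'k mpoly ring" .
  show ?R
  proof (intro conjI ballI)
    show "I \<subseteq> carrier (Rpoly a b c)" by (rule a_subset)
    show "0 \<in> I" using additive_subgroup.zero_closed[OF is_additive_subgroup] by simp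
    fix x assume x: "x \<in> I"
    show "- x \<in> I" using additive_subgroup.a_inv_closed[OF is_additive_subgroup x] Rpoly_ainv[of x a b c] x a_subset by auto
    { fix y assume "y \<in> I" then show "x + y \<in> I" using additive_subgroup.a_closed[OF is_additive_subgroup x] by simp }
    { fix r :: "'k mpoly" assume "r \<in> carrier (Rpoly a b c)" then show "r * x \<in> I" using I_l_closed[OF x] by simp }
  qed
next
  assume R: ?R
  interpret cring "Rpoly a b c :: 'k mpoly ring" by (rule Rpoly_cring)
  show ?L
  proof (rule idealI)
    show "ring (Rpoly a b c :: 'k mpoly ring)" by (rule Rpoly_ring)
    show "subgroup I (add_monoid (Rpoly a b c :: 'k mpoly ring))"
    proof (rule group.subgroupI[OF a_group])
      show "I \<subseteq> carrier (add_monoid (Rpoly a b c))" using R by simp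
      show "I \<noteq> {}" using R by blast
      fix x y assume "x \<in> I" "y \<in> I"
      then show "inv\<^bsub>add_monoid (Rpoly a b c)\<^esub> x \<in> I"
        using R Rpoly_ainv[of x a b c] by (auto simp: a_inv_def)
      show "x \<otimes>\<^bsub>add_monoid (Rpoly a b c)\<^esub> y \<in> I" using R \<open>x \<in> I\<close> \<open>y \<in> I\<close> by simp
    qed
  qed (use R in \<open>auto simp: mult.commute\<close>)
qed



abbreviation box :: "nat \<Rightarrow> nat \<Rightarrow> nat \<Rightarrow> (nat\<times>nat\<times>nat) set" where
  "box a b c \<equiv> {1..a} \<times> {1..b} \<times> {1..c}"

lemma box_back: "invol f \<Longrightarrow> f ` X = Y \<Longrightarrow> f ` Y = X"
  by (auto simp: invol_def image_iff) (metis)+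

lemma ren_carrier:
  assumes "invol f" "f ` box a b c = box a' b' c'" "p \<in> carrier (Rpoly a b c)"
  shows "ren f p \<in> carrier (Rpoly a' b' c')"
  using assms invol.pvars_ren[OF assms(1), of p] by (auto simp: carrier_Rpoly)

lemma ren_image_carrier:
  assumes "invol f" "f ` box a b c = box a' b' c'"
  shows "ren f ` carrier (Rpoly a b c) = (carrier (Rpoly a' b' c') :: 'k::field mpoly set)"
proof (intro equalityI subsetI)
  fix q assume "q \<in> (ren f ` carrier (Rpoly a b c) :: 'k mpoly set)"
  then show "q \<in> carrier (Rpoly a' b' c')" using ren_carrier[OF assms] by blast
next
  interpret invol f by fact
  fix q :: "'k mpoly" assume q: "q \<in> carrier (Rpoly a' b' c')"
  have "ren f q \<in> carrier (Rpoly a b c)" by (rule ren_carrier[OF assms(1) box_back[OF assms] q])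
  moreover have "q = ren f (ren f q)" by simp
  ultimately show "q \<in> ren f ` carrier (Rpoly a b c)" by blast
qed

lemma ideal_ren:
  assumes "invol f" "f ` box a b c = box a' b' c'" "ideal I (Rpoly a b c :: 'k::field mpoly ring)"
  shows "ideal (ren f ` I) (Rpoly a' b' c' :: 'k mpoly ring)"
proof -
  interpret invol f by fact
  have I: "I \<subseteq> carrier (Rpoly a b c)" "0 \<in> I" "\<And>x y. x\<in>I \<Longrightarrow> y\<in>I \<Longrightarrow> x + y \<in> I"
    "\<And>x. x\<in>I \<Longrightarrow> - x \<in> I" "\<And>x r. x\<in>I \<Longrightarrow> r\<in>carrier (Rpoly a b c) \<Longrightarrow> r * x \<in> I"
    using assms(3) unfolding ideal_Rpoly_iff by auto
  show ?thesis unfolding ideal_Rpoly_iff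
  proof (intro conjI ballI)
    show "ren f ` I \<subseteq> carrier (Rpoly a' b' c')" using I(1) ren_carrier[OF assms(1,2)] by blast
    show "0 \<in> ren f ` I" using I(2) by (metis image_eqI ren_zero)
    fix x assume "x \<in> ren f ` I"
    then obtain x0 where x0: "x0 \<in> I" "x = ren f x0" by blast
    show "- x \<in> ren f ` I" using x0 I(4) by (metis image_eqI ren_uminus)
    { fix y assume "y \<in> ren f ` I"
      then obtain y0 where "y0 \<in> I" "y = ren f y0" by blast
      then show "x + y \<in> ren f ` I" using x0 I(3) by (metis image_eqI ren_add) }
    { fix r :: "'k mpoly" assume r: "r \<in> carrier (Rpoly a' b' c')"
      have "ren f r \<in> carrier (Rpoly a b c)" by (rule ren_carrier[OF assms(1) box_back[OF assms(1,2)] r])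
      then have "ren f r * x0 \<in> I" using I(5) x0 by blast
      moreover have "ren f (ren f r * x0) = r * x" using x0 by (simp add: ren_mult)
      ultimately show "r * x \<in> ren f ` I" by (metis image_eqI) }
  qed
qed

lemma genideal_ren:
  assumes "invol f" "f ` box a b c = box a' b' c'" "G \<subseteq> carrier (Rpoly a b c :: 'k::field mpoly ring)"
  shows "ren f ` genideal (Rpoly a b c) G = genideal (Rpoly a' b' c' :: 'k mpoly ring) (ren f ` G)"
proof -
  interpret invol f by fact
  interpret R: ring "Rpoly a b c :: 'k mpoly ring" by (rule Rpoly_ring)
  interpret S: ring "Rpoly a' b' c' :: 'k mpoly ring" by (rule Rpoly_ring)
  have bk: "f ` box a' b' c' = box a b c" by (rule box_back[OF assms(1,2)])
  have G': "ren f ` G \<subseteq> carrier (Rpoly a' b' c')" using assms(3) ren_carrier[OF assms(1,2)] by blast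
  have idR: "ideal (genideal (Rpoly a b c) G) (Rpoly a b c)" by (rule R.genideal_ideal[OF assms(3)])
  have idS: "ideal (genideal (Rpoly a' b' c') (ren f ` G)) (Rpoly a' b' c')" by (rule S.genideal_ideal[OF G'])
  show ?thesis
  proof
    have "G \<subseteq> ren f ` genideal (Rpoly a' b' c') (ren f ` G)"
    proof
      fix g assume "g \<in> G"
      then have "ren f g \<in> genideal (Rpoly a' b' c') (ren f ` G)" using S.genideal_self[OF G'] by blast
      then show "g \<in> ren f ` genideal (Rpoly a' b' c') (ren f ` G)" by (metis image_eqI ren_ren)
    qed
    then have "genideal (Rpoly a b c) G \<subseteq> ren f ` genideal (Rpoly a' b' c') (ren f ` G)"
      by (rule R.genideal_minimal[OF ideal_ren[OF assms(1) bk idS]])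
    then have "ren f ` genideal (Rpoly a b c) G \<subseteq> ren f ` ren f ` genideal (Rpoly a' b' c') (ren f ` G)"
      by (rule image_mono)
    also have "\<dots> = genideal (Rpoly a' b' c') (ren f ` G)" by (simp add: image_image)
    finally show "ren f ` genideal (Rpoly a b c) G \<subseteq> genideal (Rpoly a' b' c') (ren f ` G)" .
  next
    show "genideal (Rpoly a' b' c') (ren f ` G) \<subseteq> ren f ` genideal (Rpoly a b c) G"
      by (rule S.genideal_minimal[OF ideal_ren[OF assms(1,2) idR]])
        (use R.genideal_self[OF assms(3)] in blast)
  qed
qed

lemma coset_ren:
  assumes "invol f"
  shows "ren f ` (I +>\<^bsub>Rpoly a b c\<^esub> x) = (ren f ` I) +>\<^bsub>Rpoly a' b' c'\<^esub> ren f (x :: 'k::field mpoly)"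
  using invol.ren_add[OF assms]
  by (auto simp: a_r_coset_def r_coset_def image_iff Rpoly_def)

lemma quot_iso:
  assumes "invol f" "f ` box a b c = box a' b' c'" "ren f ` I = J"
  shows "(\<lambda>X. ren f ` X) \<in> ring_iso (Rpoly a b c Quot I) (Rpoly a' b' c' Quot J :: 'k::field mpoly set ring)"
proof -
  interpret invol f by fact
  have cos: "ren f ` (I +>\<^bsub>Rpoly a b c\<^esub> x) = J +>\<^bsub>Rpoly a' b' c'\<^esub> ren f (x :: 'k mpoly)" for x
    using coset_ren[OF assms(1)] assms(3) by blast
  have carr: "carrier (Rpoly a b c Quot I) = {I +>\<^bsub>Rpoly a b c\<^esub> x | x. x \<in> carrier (Rpoly a b c)}"
    for a b c and I :: "'k mpoly set"
    by (auto simp: FactRing_def A_RCOSETS_def RCOSETS_def a_r_coset_def)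
  have hom: "(\<lambda>X. ren f ` X) \<in> ring_hom (Rpoly a b c Quot I) (Rpoly a' b' c' Quot J)"
  proof (rule ring_hom_memI)
    fix X assume "X \<in> carrier (Rpoly a b c Quot I)"
    then obtain x where "x \<in> carrier (Rpoly a b c)" "X = I +>\<^bsub>Rpoly a b c\<^esub> x" by (auto simp: carr)
    then show "ren f ` X \<in> carrier (Rpoly a' b' c' Quot J)"
      using cos ren_carrier[OF assms(1,2)] unfolding carr by blast
  next
    fix X Y :: "'k mpoly set"
    show "ren f ` (X \<otimes>\<^bsub>Rpoly a b c Quot I\<^esub> Y) = ren f ` X \<otimes>\<^bsub>Rpoly a' b' c' Quot J\<^esub> ren f ` Y"
      by (simp add: FactRing_def rcoset_mult_def image_UN cos ren_mult)
    show "ren f ` (X \<oplus>\<^bsub>Rpoly a b c Quot I\<^esub> Y) = ren f ` X \<oplus>\<^bsub>Rpoly a' b' c' Quot J\<^esub> ren f ` Y"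
      by ((auto simp: FactRing_def set_add_def set_mult_def ren_add image_iff); blast)
  next
    show "ren f ` \<one>\<^bsub>Rpoly a b c Quot I\<^esub> = \<one>\<^bsub>Rpoly a' b' c' Quot J\<^esub>"
      using cos[of 1] by (simp add: FactRing_def)
  qed
  have bij: "bij_betw (\<lambda>X. ren f ` X) (carrier (Rpoly a b c Quot I)) (carrier (Rpoly a' b' c' Quot J))"
  proof (rule bij_betwI')
    fix X Y :: "'k mpoly set"
    show "(ren f ` X = ren f ` Y) = (X = Y)"
    proof
      assume "ren f ` X = ren f ` Y"
      then have "ren f ` ren f ` X = ren f ` ren f ` Y" by simp
      then show "X = Y" by (simp add: image_image)
    qed simp
  next
    fix X assume "X \<in> carrier (Rpoly a b c Quot I)"
    then obtain x where "x \<in> carrier (Rpoly a b c)" "X = I +>\<^bsub>Rpoly a b c\<^esub> x" by (auto simp: carr)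
    then show "ren f ` X \<in> carrier (Rpoly a' b' c' Quot J)"
      using cos ren_carrier[OF assms(1,2)] unfolding carr by blast
  next
    fix Y assume "Y \<in> carrier (Rpoly a' b' c' Quot J)"
    then obtain y where y: "y \<in> carrier (Rpoly a' b' c')" "Y = J +>\<^bsub>Rpoly a' b' c'\<^esub> y" by (auto simp: carr)
    have "ren f y \<in> carrier (Rpoly a b c)" by (rule ren_carrier[OF assms(1) box_back[OF assms(1,2)] y(1)])
    moreover have "ren f ` (I +>\<^bsub>Rpoly a b c\<^esub> ren f y) = Y" using cos y by simp
    ultimately show "\<exists>X\<in>carrier (Rpoly a b c Quot I). Y = ren f ` X" by (auto simp: carr)
  qed
  show ?thesis using hom bij by (simp add: ring_iso_def)
qed



definition Bin :: "nat \<Rightarrow> nat \<Rightarrow> nat \<Rightarrow> 'k::field mpoly set" where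
  "Bin a b c =
    {xvar i j k * xvar i' j' k' - xvar i' j k * xvar i j' k' | i j k i' j' k'.
       (i,j,k) \<in> box a b c \<and> (i',j',k') \<in> box a b c}
  \<union> {xvar i j k * xvar i' j' k' - xvar i j' k * xvar i' j k' | i j k i' j' k'.
       (i,j,k) \<in> box a b c \<and> (i',j',k') \<in> box a b c}
  \<union> {xvar i j k * xvar i' j' k' - xvar i j k' * xvar i' j' k | i j k i' j' k'.
       (i,j,k) \<in> box a b c \<and> (i',j',k') \<in> box a b c}"

lemma xvar_carrier: "(i,j,k) \<in> box a b c \<Longrightarrow> xvar i j k \<in> carrier (Rpoly a b c)"
  by (simp add: carrier_Rpoly pvars_xvar)

lemma binom_carrier:
  assumes "(i,j,k) \<in> box a b c" "(i',j',k') \<in> box a b c" "(i2,j2,k2) \<in> box a b c" "(i3,j3,k3) \<in> box a b c"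
  shows "xvar i j k * xvar i' j' k' - xvar i2 j2 k2 * xvar i3 j3 k3 \<in> carrier (Rpoly a b c :: 'k::field mpoly ring)"
  using assms by (intro Rpoly_closed xvar_carrier)

lemma Bin_carrier: "Bin a b c \<subseteq> carrier (Rpoly a b c :: 'k::field mpoly ring)"
  unfolding Bin_def by (auto intro!: binom_carrier)

lemma enc_dec:
  fixes j b k :: nat
  assumes "1 \<le> j" "j \<le> b" "1 \<le> k"
  shows "((k - 1) * b + j - 1) mod b + 1 = j" "((k - 1) * b + j - 1) div b + 1 = k"
proof -
  obtain j0 k0 where jk: "j = Suc j0" "k = Suc k0" using assms by (metis Suc_le_D One_nat_def)
  have "j0 < b" using assms jk by simp
  then show "((k - 1) * b + j - 1) mod b + 1 = j" "((k - 1) * b + j - 1) div b + 1 = k"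
    using jk by (simp_all add: add.commute)
qed

lemma enc_range:
  fixes j b k c :: nat
  assumes "1 \<le> j" "j \<le> b" "1 \<le> k" "k \<le> c"
  shows "1 \<le> (k - 1) * b + j" "(k - 1) * b + j \<le> b * c"
proof -
  show "1 \<le> (k - 1) * b + j" using assms by simp
  have "(k - 1) * b \<le> (c - 1) * b" using assms by simp
  then have "(k - 1) * b + j \<le> (c - 1) * b + b" using add_mono assms(2) by blast
  also have "\<dots> = b * c" using assms by (cases c) (auto simp: algebra_simps)
  finally show "(k - 1) * b + j \<le> b * c" .
qed

lemma dec_range:
  fixes p b c :: nat
  assumes "1 \<le> p" "p \<le> b * c"
  shows "(p - 1) mod b + 1 \<in> {1..b}" "(p - 1) div b + 1 \<in> {1..c}"
proof -
  have b: "0 < b" using assms by (cases b) auto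
  then show "(p - 1) mod b + 1 \<in> {1..b}" by (simp add: Suc_leI)
  have "p - 1 < c * b" using assms by (simp add: mult.commute)
  then have "(p - 1) div b < c" by (simp add: less_mult_imp_div_less)
  then show "(p - 1) div b + 1 \<in> {1..c}" by simp
qed

lemma hcat_enc: assumes "1 \<le> j" "j \<le> b" "1 \<le> k" shows "hcat b i ((k - 1) * b + j) = xvar i j k"
  using enc_dec[OF assms] unfolding hcat_def by simp

lemma vcat_enc: assumes "1 \<le> i" "i \<le> a" "1 \<le> k" shows "vcat a ((k - 1) * a + i) j = xvar i j k"
  using enc_dec[OF assms] unfolding vcat_def by simp

lemma minors_h_Bin: "minors2 (hcat b) a (b * c) \<subseteq> (Bin a b c :: 'k::field mpoly set)"
proof
  fix e :: "'k mpoly" assume "e \<in> minors2 (hcat b) a (b * c)"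
  then obtain i i' p q where e: "e = hcat b i p * hcat b i' q - hcat b i q * hcat b i' p"
    and r: "1 \<le> i" "i < i'" "i' \<le> a" "1 \<le> p" "p < q" "q \<le> b * c"
    by (auto simp: minors2_def)
  define j where "j = (p - 1) mod b + 1"
  define k where "k = (p - 1) div b + 1"
  define j' where "j' = (q - 1) mod b + 1"
  define k' where "k' = (q - 1) div b + 1"
  have rg: "j \<in> {1..b}" "k \<in> {1..c}" "j' \<in> {1..b}" "k' \<in> {1..c}"
    using dec_range[of p b c] dec_range[of q b c] r unfolding j_def k_def j'_def k'_def by auto
  have "e = xvar i j k * xvar i' j' k' - xvar i' j k * xvar i j' k'"
    by (simp add: e hcat_def j_def k_def j'_def k'_def mult.commute)
  moreover have "i \<in> {1..a}" "i' \<in> {1..a}" using r by auto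
  ultimately show "e \<in> Bin a b c" unfolding Bin_def using rg by blast
qed

lemma minors_v_Bin: "minors2 (vcat a) (a * c) b \<subseteq> (Bin a b c :: 'k::field mpoly set)"
proof
  fix e :: "'k mpoly" assume "e \<in> minors2 (vcat a) (a * c) b"
  then obtain q q' j j' where e: "e = vcat a q j * vcat a q' j' - vcat a q j' * vcat a q' j"
    and r: "1 \<le> q" "q < q'" "q' \<le> a * c" "1 \<le> j" "j < j'" "j' \<le> b"
    by (auto simp: minors2_def)
  define i where "i = (q - 1) mod a + 1"
  define k where "k = (q - 1) div a + 1"
  define i' where "i' = (q' - 1) mod a + 1"
  define k' where "k' = (q' - 1) div a + 1"
  have rg: "i \<in> {1..a}" "k \<in> {1..c}" "i' \<in> {1..a}" "k' \<in> {1..c}"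
    using dec_range[of q a c] dec_range[of q' a c] r unfolding i_def k_def i'_def k'_def by auto
  have "e = xvar i j k * xvar i' j' k' - xvar i j' k * xvar i' j k'"
    by (simp add: e vcat_def i_def k_def i'_def k'_def)
  moreover have "j \<in> {1..b}" "j' \<in> {1..b}" using r by auto
  ultimately show "e \<in> Bin a b c" unfolding Bin_def using rg by blast
qed

lemma minor_any:
  fixes M :: "nat \<Rightarrow> nat \<Rightarrow> 'k::field mpoly"
  assumes J: "minors2 M nr nc \<subseteq> J" "0 \<in> J" "\<And>x. x \<in> J \<Longrightarrow> - x \<in> J"
    and r: "1 \<le> i" "i \<le> nr" "1 \<le> i'" "i' \<le> nr" "1 \<le> p" "p \<le> nc" "1 \<le> q" "q \<le> nc"
  shows "M i p * M i' q - M i q * M i' p \<in> J"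
proof -
  have mem: "M i p * M i' q - M i q * M i' p \<in> J" if "1 \<le> i" "i < i'" "i' \<le> nr" "1 \<le> p" "p < q" "q \<le> nc" for i i' p q
    using J(1) that unfolding minors2_def by blast
  consider "i = i'" | "p = q" | "i < i'" "p < q" | "i < i'" "q < p" | "i' < i" "p < q" | "i' < i" "q < p"
    by linarith
  then show ?thesis
  proof cases
    case 1 then show ?thesis using J(2) by (simp add: mult.commute)
  next
    case 2 then show ?thesis using J(2) by simp
  next
    case 3 then show ?thesis using mem r by simp
  next
    case 4 then show ?thesis using J(3)[OF mem[of i i' q p]] r by simp
  next
    case 5 then show ?thesis using J(3)[OF mem[of i' i p q]] r by (simp add: mult.commute)
  next
    case 6 then show ?thesis using mem[of i' i q p] r by (simp add: mult.commute)
  qed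
qed

lemma Iideal_Bin: "Iideal a b c = genideal (Rpoly a b c) (Bin a b c :: 'k::field mpoly set)"
proof -
  interpret R: ring "Rpoly a b c :: 'k mpoly ring" by (rule Rpoly_ring)
  let ?G = "minors2 (hcat b) a (b * c) \<union> minors2 (vcat a) (a * c) b :: 'k mpoly set"
  have G: "?G \<subseteq> Bin a b c" using minors_h_Bin minors_v_Bin by blast
  have Gc: "?G \<subseteq> carrier (Rpoly a b c)" using G Bin_carrier by blast
  have idB: "ideal (genideal (Rpoly a b c) (Bin a b c)) (Rpoly a b c :: 'k mpoly ring)" by (rule R.genideal_ideal[OF Bin_carrier])
  have idG: "ideal (genideal (Rpoly a b c) ?G) (Rpoly a b c :: 'k mpoly ring)" by (rule R.genideal_ideal[OF Gc])
  have sub1: "genideal (Rpoly a b c) ?G \<subseteq> genideal (Rpoly a b c :: 'k mpoly ring) (Bin a b c)"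
    by (rule R.genideal_minimal[OF idB]) (use G R.genideal_self[OF Bin_carrier] in blast)
  define J where "J = genideal (Rpoly a b c) ?G"
  have JG: "?G \<subseteq> J" unfolding J_def by (rule R.genideal_self[OF Gc])
  have J0: "0 \<in> J" and Jneg: "\<And>x. x \<in> J \<Longrightarrow> - x \<in> J" and Jadd: "\<And>x y. x \<in> J \<Longrightarrow> y \<in> J \<Longrightarrow> x + y \<in> J"
    using idG unfolding J_def ideal_Rpoly_iff by auto
  have e1: "xvar i j k * xvar i' j' k' - xvar i' j k * xvar i j' k' \<in> J"
    if "(i,j,k) \<in> box a b c" "(i',j',k') \<in> box a b c" for i j k i' j' k'
  proof -
    have "hcat b i ((k - 1) * b + j) * hcat b i' ((k' - 1) * b + j') - hcat b i ((k' - 1) * b + j') * hcat b i' ((k - 1) * b + j) \<in> J"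
      by (rule minor_any[of "hcat b" a "b * c"]) (use JG J0 Jneg that enc_range[of j b k c] enc_range[of j' b k' c] in auto)
    moreover have h: "hcat b i ((k - 1) * b + j) = xvar i j k" "hcat b i' ((k' - 1) * b + j') = xvar i' j' k'"
      "hcat b i ((k' - 1) * b + j') = xvar i j' k'" "hcat b i' ((k - 1) * b + j) = xvar i' j k"
      using that hcat_enc[of j b k i] hcat_enc[of j' b k' i'] hcat_enc[of j' b k' i] hcat_enc[of j b k i'] by auto
    moreover have "xvar i j' k' * xvar i' j k = (xvar i' j k * xvar i j' k' :: 'k mpoly)" by (rule mult.commute)
    ultimately show ?thesis by (simp only: h)
  qed
  have e2: "xvar i j k * xvar i' j' k' - xvar i j' k * xvar i' j k' \<in> J"
    if "(i,j,k) \<in> box a b c" "(i',j',k') \<in> box a b c" for i j k i' j' k'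
  proof -
    have "vcat a ((k - 1) * a + i) j * vcat a ((k' - 1) * a + i') j' - vcat a ((k - 1) * a + i) j' * vcat a ((k' - 1) * a + i') j \<in> J"
      by (rule minor_any[of "vcat a" "a * c" b]) (use JG J0 Jneg that enc_range[of i a k c] enc_range[of i' a k' c] in auto)
    moreover have h: "vcat a ((k - 1) * a + i) j = xvar i j k" "vcat a ((k' - 1) * a + i') j' = xvar i' j' k'"
      "vcat a ((k - 1) * a + i) j' = xvar i j' k" "vcat a ((k' - 1) * a + i') j = xvar i' j k'"
      using that vcat_enc[of i a k j] vcat_enc[of i' a k' j'] vcat_enc[of i a k j'] vcat_enc[of i' a k' j] by auto
    ultimately show ?thesis by (simp only: h)
  qed
  have e3: "xvar i j k * xvar i' j' k' - xvar i j k' * xvar i' j' k \<in> J"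
    if "(i,j,k) \<in> box a b c" "(i',j',k') \<in> box a b c" for i j k i' j' k'
  proof -
    have "(xvar i j k * xvar i' j' k' - xvar i' j k * xvar i j' k') + (xvar i' j k * xvar i j' k' - xvar i' j' k * xvar i j k') \<in> J"
      by (rule Jadd[OF e1[OF that] e2]) (use that in auto)
    moreover have "(xvar i j k * xvar i' j' k' - xvar i' j k * xvar i j' k') + (xvar i' j k * xvar i j' k' - xvar i' j' k * xvar i j k')
       = (xvar i j k * xvar i' j' k' - xvar i j k' * xvar i' j' k :: 'k mpoly)" by (simp add: algebra_simps)
    ultimately show ?thesis by simp
  qed
  have "(Bin a b c :: 'k mpoly set) \<subseteq> J" unfolding Bin_def using e1 e2 e3 by blast
  then have sub2: "genideal (Rpoly a b c :: 'k mpoly ring) (Bin a b c) \<subseteq> J"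
    using R.genideal_minimal[OF idG[folded J_def]] by blast
  show ?thesis using sub1 sub2 unfolding Iideal_def J_def by blast
qed



lemma K_iso_of:
  assumes f: "invol f" and bx: "f ` box a b c = box a' b' c'"
    and bin: "ren f ` (Bin a b c :: 'k::field mpoly set) = Bin a' b' c'"
  shows "K_alg_iso a b c a' b' c' (\<lambda>X. ren f ` (X :: 'k mpoly set))"
proof -
  interpret invol f by fact
  have "ren f ` (Iideal a b c :: 'k mpoly set) = genideal (Rpoly a' b' c') (ren f ` Bin a b c)"
    unfolding Iideal_Bin by (rule genideal_ren[OF f bx Bin_carrier])
  also have "\<dots> = Iideal a' b' c'" unfolding Iideal_Bin bin ..
  finally have I: "ren f ` (Iideal a b c :: 'k mpoly set) = Iideal a' b' c'" .
  show ?thesis unfolding K_alg_iso_def Qalg_def qconst_def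
  proof
    show "(\<lambda>X. ren f ` X) \<in> ring_iso (Rpoly a b c Quot Iideal a b c) (Rpoly a' b' c' Quot (Iideal a' b' c' :: 'k mpoly set))"
      by (rule quot_iso[OF f bx I])
    show "\<forall>k. ren f ` (Iideal a b c +>\<^bsub>Rpoly a b c\<^esub> pconst k) = (Iideal a' b' c' :: 'k mpoly set) +>\<^bsub>Rpoly a' b' c'\<^esub> pconst k"
    proof
      fix k :: 'k
      show "ren f ` (Iideal a b c +>\<^bsub>Rpoly a b c\<^esub> pconst k) = (Iideal a' b' c' :: 'k mpoly set) +>\<^bsub>Rpoly a' b' c'\<^esub> pconst k"
        using coset_ren[OF f, where I="Iideal a b c" and x="pconst k" and a=a and b=b and c=c and a'=a' and b'=b' and c'=c'] I by simp
    qed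
  qed
qed

lemma K_iso_trans:
  "K_alg_iso a b c a' b' c' \<phi> \<Longrightarrow> K_alg_iso a' b' c' a'' b'' c'' \<psi> \<Longrightarrow> K_alg_iso a b c a'' b'' c'' (\<psi> \<circ> \<phi>)"
  unfolding K_alg_iso_def using ring_iso_set_trans by fastforce

lemma K_iso_refl: "K_alg_iso a b c a b c id"
  unfolding K_alg_iso_def using ring_iso_set_refl by simp

definition f12 :: "nat\<times>nat\<times>nat \<Rightarrow> nat\<times>nat\<times>nat" where "f12 = (\<lambda>(i,j,k). (j,i,k))"
definition f23 :: "nat\<times>nat\<times>nat \<Rightarrow> nat\<times>nat\<times>nat" where "f23 = (\<lambda>(i,j,k). (i,k,j))"

lemma invol12: "invol f12" by (unfold_locales) (auto simp: f12_def split: prod.splits)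
lemma invol23: "invol f23" by (unfold_locales) (auto simp: f23_def split: prod.splits)

lemma box12: "f12 ` box a b c = box b a c"
  by (auto simp: f12_def image_iff)
lemma box23: "f23 ` box a b c = box a c b"
  by (auto simp: f23_def image_iff)

lemma ren12_xvar: "ren f12 (xvar i j k) = xvar j i k"
  using invol.ren_xvar[OF invol12] by (simp add: f12_def)
lemma ren23_xvar: "ren f23 (xvar i j k) = xvar i k j"
  using invol.ren_xvar[OF invol23] by (simp add: f23_def)

lemma Bin_I1: "e = xvar i j k * xvar i' j' k' - xvar i' j k * xvar i j' k' \<Longrightarrow> (i,j,k) \<in> box a b c \<Longrightarrow>
   (i',j',k') \<in> box a b c \<Longrightarrow> e \<in> (Bin a b c :: 'k::field mpoly set)"
  unfolding Bin_def by blast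
lemma Bin_I2: "e = xvar i j k * xvar i' j' k' - xvar i j' k * xvar i' j k' \<Longrightarrow> (i,j,k) \<in> box a b c \<Longrightarrow>
   (i',j',k') \<in> box a b c \<Longrightarrow> e \<in> (Bin a b c :: 'k::field mpoly set)"
  unfolding Bin_def by blast
lemma Bin_I3: "e = xvar i j k * xvar i' j' k' - xvar i j k' * xvar i' j' k \<Longrightarrow> (i,j,k) \<in> box a b c \<Longrightarrow>
   (i',j',k') \<in> box a b c \<Longrightarrow> e \<in> (Bin a b c :: 'k::field mpoly set)"
  unfolding Bin_def by blast

lemma Bin12_sub: "ren f12 ` (Bin a b c :: 'k::field mpoly set) \<subseteq> Bin b a c"
proof
  interpret invol f12 by (rule invol12)
  fix e :: "'k mpoly" assume "e \<in> ren f12 ` Bin a b c"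
  then obtain p where p: "p \<in> Bin a b c" "e = ren f12 p" by blast
  from p(1)[unfolded Bin_def] show "e \<in> Bin b a c"
  proof (elim UnE CollectE exE conjE)
    fix i j k i' j' k' assume h: "p = xvar i j k * xvar i' j' k' - xvar i' j k * xvar i j' k'"
      "(i,j,k) \<in> box a b c" "(i',j',k') \<in> box a b c"
    show "e \<in> Bin b a c"
      by (rule Bin_I2[of _ j i k j' i' k']) (use h p(2) in \<open>auto simp: ren_diff ren_mult ren12_xvar\<close>)
  next
    fix i j k i' j' k' assume h: "p = xvar i j k * xvar i' j' k' - xvar i j' k * xvar i' j k'"
      "(i,j,k) \<in> box a b c" "(i',j',k') \<in> box a b c"
    show "e \<in> Bin b a c"
      by (rule Bin_I1[of _ j i k j' i' k']) (use h p(2) in \<open>auto simp: ren_diff ren_mult ren12_xvar\<close>)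
  next
    fix i j k i' j' k' assume h: "p = xvar i j k * xvar i' j' k' - xvar i j k' * xvar i' j' k"
      "(i,j,k) \<in> box a b c" "(i',j',k') \<in> box a b c"
    show "e \<in> Bin b a c"
      by (rule Bin_I3[of _ j i k j' i' k']) (use h p(2) in \<open>auto simp: ren_diff ren_mult ren12_xvar\<close>)
  qed
qed

lemma Bin23_sub: "ren f23 ` (Bin a b c :: 'k::field mpoly set) \<subseteq> Bin a c b"
proof
  interpret invol f23 by (rule invol23)
  fix e :: "'k mpoly" assume "e \<in> ren f23 ` Bin a b c"
  then obtain p where p: "p \<in> Bin a b c" "e = ren f23 p" by blast
  from p(1)[unfolded Bin_def] show "e \<in> Bin a c b"
  proof (elim UnE CollectE exE conjE)
    fix i j k i' j' k' assume h: "p = xvar i j k * xvar i' j' k' - xvar i' j k * xvar i j' k'"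
      "(i,j,k) \<in> box a b c" "(i',j',k') \<in> box a b c"
    show "e \<in> Bin a c b"
      by (rule Bin_I1[of _ i k j i' k' j']) (use h p(2) in \<open>auto simp: ren_diff ren_mult ren23_xvar\<close>)
  next
    fix i j k i' j' k' assume h: "p = xvar i j k * xvar i' j' k' - xvar i j' k * xvar i' j k'"
      "(i,j,k) \<in> box a b c" "(i',j',k') \<in> box a b c"
    show "e \<in> Bin a c b"
      by (rule Bin_I3[of _ i k j i' k' j']) (use h p(2) in \<open>auto simp: ren_diff ren_mult ren23_xvar\<close>)
  next
    fix i j k i' j' k' assume h: "p = xvar i j k * xvar i' j' k' - xvar i j k' * xvar i' j' k"
      "(i,j,k) \<in> box a b c" "(i',j',k') \<in> box a b c"
    show "e \<in> Bin a c b"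
      by (rule Bin_I2[of _ i k j i' k' j']) (use h p(2) in \<open>auto simp: ren_diff ren_mult ren23_xvar\<close>)
  qed
qed

lemma Bin_eq:
  assumes "invol f" "\<And>a b c. ren f ` (Bin a b c :: 'k::field mpoly set) \<subseteq> Bin (fa a b c) (fb a b c) (fc a b c)"
    "fa (fa a b c) (fb a b c) (fc a b c) = a" "fb (fa a b c) (fb a b c) (fc a b c) = b" "fc (fa a b c) (fb a b c) (fc a b c) = c"
  shows "ren f ` (Bin a b c :: 'k::field mpoly set) = Bin (fa a b c) (fb a b c) (fc a b c)"
proof
  interpret invol f by fact
  show "ren f ` (Bin a b c :: 'k mpoly set) \<subseteq> Bin (fa a b c) (fb a b c) (fc a b c)" by (rule assms(2))
  have "ren f ` (Bin (fa a b c) (fb a b c) (fc a b c) :: 'k mpoly set) \<subseteq> Bin a b c"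
    using assms(2)[of "fa a b c" "fb a b c" "fc a b c"] assms(3-5) by simp
  then have "ren f ` ren f ` (Bin (fa a b c) (fb a b c) (fc a b c) :: 'k mpoly set) \<subseteq> ren f ` Bin a b c"
    by (rule image_mono)
  then show "Bin (fa a b c) (fb a b c) (fc a b c) \<subseteq> ren f ` (Bin a b c :: 'k mpoly set)"
    by (simp add: image_image)
qed

lemma iso12: "\<exists>\<phi>. K_alg_iso a b c b a c (\<phi> :: 'k::field mpoly set \<Rightarrow> 'k mpoly set)"
  using K_iso_of[OF invol12 box12 Bin_eq[where fa="\<lambda>a b c. b" and fb="\<lambda>a b c. a" and fc="\<lambda>a b c. c", OF invol12 Bin12_sub]]
  by auto

lemma iso23: "\<exists>\<phi>. K_alg_iso a b c a c b (\<phi> :: 'k::field mpoly set \<Rightarrow> 'k mpoly set)"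
  using K_iso_of[OF invol23 box23 Bin_eq[where fa="\<lambda>a b c. a" and fb="\<lambda>a b c. c" and fc="\<lambda>a b c. b", OF invol23 Bin23_sub]]
  by auto

lemma mset2: assumes e: "add_mset b {#c#} = add_mset y {#z#}" shows "(b = y \<and> c = z) \<or> (b = z \<and> c = y)"
proof -
  have "b \<in># add_mset b {#c#}" by simp
  then have "b \<in># add_mset y {#z#}" by (simp only: e)
  then consider "b = y" | "b = z" by auto
  then show ?thesis
  proof cases
    case 1 then show ?thesis using e by simp
  next
    case 2
    from e have "add_mset b {#c#} = add_mset z {#y#}" by (simp only: add_mset_commute[of y z])
    then show ?thesis using 2 by simp
  qed
qed

lemma mset3: assumes "mset [a, b, c :: nat] = mset [x, y, z]"
  shows "(a,b,c) \<in> {(x,y,z),(y,x,z),(x,z,y),(y,z,x),(z,x,y),(z,y,x)}"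
proof -
  have e: "add_mset a (add_mset b {#c#}) = add_mset x (add_mset y {#z#})" using assms by simp
  have "a \<in># add_mset a (add_mset b {#c#})" by simp
  then have "a \<in># add_mset x (add_mset y {#z#})" by (simp only: e)
  then consider "a = x" | "a = y" | "a = z" by auto
  then show ?thesis
  proof cases
    case 1 then have "add_mset b {#c#} = add_mset y {#z#}" using e by simp
    from mset2[OF this] 1 show ?thesis by auto
  next
    case 2
    from e have "add_mset a (add_mset b {#c#}) = add_mset y (add_mset x {#z#})" by (simp only: add_mset_commute[of x y])
    then have "add_mset b {#c#} = add_mset x {#z#}" using 2 by simp
    from mset2[OF this] 2 show ?thesis by auto
  next
    case 3
    from e have "add_mset a (add_mset b {#c#}) = add_mset z (add_mset x {#y#})"
      by (simp only: add_mset_commute[of y z] add_mset_commute[of x z])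
    then have "add_mset b {#c#} = add_mset x {#y#}" using 3 by simp
    from mset2[OF this] 3 show ?thesis by auto
  qed
qed

theorem theorem4p1:
  fixes m n r m' n' r' :: nat
  assumes "0 < m" and "0 < n" and "0 < r"
    and "mset [m', n', r'] = mset [m, n, r]"
  shows "\<exists>\<phi> :: 'k::field mpoly set \<Rightarrow> 'k mpoly set. K_alg_iso m n r m' n' r' \<phi>"
proof -
  have tr: "\<exists>\<phi>. K_alg_iso a b c a'' b'' c'' (\<phi> :: 'k mpoly set \<Rightarrow> 'k mpoly set)"
    if "\<exists>\<phi>. K_alg_iso a b c a' b' c' (\<phi> :: 'k mpoly set \<Rightarrow> 'k mpoly set)"
       "\<exists>\<phi>. K_alg_iso a' b' c' a'' b'' c'' (\<phi> :: 'k mpoly set \<Rightarrow> 'k mpoly set)" for a b c a' b' c' a'' b'' c''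
    using that K_iso_trans by blast
  from mset3[OF assms(4)] show ?thesis
  proof (elim insertE emptyE)
    assume "(m', n', r') = (m, n, r)" then show ?thesis using K_iso_refl by auto
  next
    assume "(m', n', r') = (n, m, r)" then show ?thesis using iso12 by auto
  next
    assume "(m', n', r') = (m, r, n)" then show ?thesis using iso23 by auto
  next
    assume "(m', n', r') = (n, r, m)" then show ?thesis using tr[OF iso12 iso23] by auto
  next
    assume "(m', n', r') = (r, m, n)" then show ?thesis using tr[OF iso23 iso12] by auto
  next
    assume "(m', n', r') = (r, n, m)" then show ?thesis using tr[OF tr[OF iso12 iso23] iso12] by auto
  qed
qed

end
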